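(* Let $V=\{1,\dots,n\}$ and let $f_z:\{0,1\}^n\to\mathbb{R}_+$ be a set function (identified with a function of binary vectors). Suppose there is a sequence of polynomials $\{\hat f_z^L\}_{L\ge1}$, $\hat f_z^L:\mathbb{R}^n\to\mathbb{R}$, and numbers $\varepsilon_z(L)\ge 0$ with $\lim_{L\to\infty}\varepsilon_z(L)=0$ such that $|f_z(\mathbf{x})-\hat f_z^L(\mathbf{x})|\le \varepsilon_z(L)$ for all $\mathbf{x}\in\{0,1\}^n$. Let $G_z$ be the multilinear relaxation of $f_z$ and let $\widehat{\nabla G_z^L}$ be the polynomial estimator defined below. Then for every $\mathbf{y}\in\mathcal{C}$, $$\big\|\nabla G_z(\mathbf{y})-\widehat{\nabla G_z^L}(\mathbf{y})\big\|_2\le 2\sqrt{n}\,\varepsilon_z(L).$$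
   Context: For $\mathbf{y}\in[0,1]^n$, $\mathbf{x}\sim\mathbf{y}$ denotes a random vector in $\{0,1\}^n$ with independent Bernoulli coordinates, $P(x_i=1)=y_i$. The multilinear relaxation of $f_z$ is $G_z(\mathbf{y})=\mathbb{E}_{\mathbf{x}\sim\mathbf{y}}[f_z(\mathbf{x})]=\sum_{\mathbf{x}\in\{0,1\}^n}f_z(\mathbf{x})\prod_{i}y_i^{x_i}(1-y_i)^{1-x_i}$. For a polynomial $p(\mathbf{y})=c_0+\sum_{\ell}c_\ell\prod_{i\in J_\ell}y_i^{k_i^\ell}$ (with $k_i^\ell\ge1$), its multilinearization is $\dot p(\mathbf{y})=c_0+\sum_\ell c_\ell\prod_{i\in J_\ell}y_i$. For $\mathbf{y}$, $[\mathbf{y}]_{+i}$ and $[\mathbf{y}]_{-i}$ denote $\mathbf{y}$ with the $i$-th coordinate set to $1$ and $0$ respectively. The polynomial estimator is the vector with coordinates $\big(\widehat{\nabla G_z^L}(\mathbf{y})\big)_i=\mathbb{E}_{\mathbf{x}\sim\mathbf{y}}[\hat f_z^L([\mathbf{x}]_{+i})]-\mathbb{E}_{\mathbf{x}\sim\mathbf{y}}[\hat f_z^L([\mathbf{x}]_{-i})]=\dot{\hat f}{}_z^L([\mathbf{y}]_{+i})-\dot{\hat f}{}_z^L([\mathbf{y}]_{-i})$, $i\in V$. $\mathcal{C}\subseteq[0,1]^n$ is a matroid polytope (convex hull of the indicator vectors of the independent sets of a matroid on $V$). *)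

theory Defs
  imports "HOL-Analysis.Analysis"
begin

text \<open>Ground set V is the finite type 'n, n = CARD('n). Subsets of V are identified
with their indicator vectors in real^'n.\<close>

definition ind_vec :: "'n::finite set \<Rightarrow> real ^ 'n" where
  "ind_vec S = (\<chi> i. if i \<in> S then 1 else 0)"

text \<open>Probability that x ~ y (independent Bernoulli coordinates) equals ind_vec S.\<close>
definition bern_prob :: "real ^ 'n::finite \<Rightarrow> 'n set \<Rightarrow> real" where
  "bern_prob y S = (\<Prod>i\<in>UNIV. if i \<in> S then y $ i else 1 - y $ i)"

definition multilinear_relax :: "('n::finite set \<Rightarrow> real) \<Rightarrow> real ^ 'n \<Rightarrow> real" where
  "multilinear_relax f y = (\<Sum>S\<in>UNIV. f S * bern_prob y S)"

definition poly_estimator :: "(real ^ 'n::finite \<Rightarrow> real) \<Rightarrow> real ^ 'n \<Rightarrow> real ^ 'n" where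
  "poly_estimator fhat y = (\<chi> i.
      (\<Sum>S\<in>UNIV. fhat (ind_vec (insert i S)) * bern_prob y S)
    - (\<Sum>S\<in>UNIV. fhat (ind_vec (S - {i})) * bern_prob y S))"

definition is_polynomial :: "(real ^ 'n::finite \<Rightarrow> real) \<Rightarrow> bool" where
  "is_polynomial p \<longleftrightarrow> (\<exists>K :: ('n \<Rightarrow> nat) set. \<exists>c :: ('n \<Rightarrow> nat) \<Rightarrow> real.
      finite K \<and> (\<forall>y. p y = (\<Sum>k\<in>K. c k * (\<Prod>i\<in>UNIV. (y $ i) ^ k i))))"

definition matroid_indep :: "'n::finite set set \<Rightarrow> bool" where
  "matroid_indep M \<longleftrightarrow>
     {} \<in> M \<and>
     (\<forall>A B. B \<in> M \<and> A \<subseteq> B \<longrightarrow> A \<in> M) \<and>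
     (\<forall>A B. A \<in> M \<and> B \<in> M \<and> card A < card B \<longrightarrow> (\<exists>x\<in>B - A. insert x A \<in> M))"

definition matroid_polytope :: "'n::finite set set \<Rightarrow> (real ^ 'n) set" where
  "matroid_polytope M = convex hull (ind_vec ` M)"

end

theory Submission
  imports Defs
begin

definition fac :: "real ^ 'n::finite \<Rightarrow> 'n set \<Rightarrow> 'n \<Rightarrow> real" where
  "fac y S j = (if j \<in> S then y $ j else 1 - y $ j)"

definition Pm :: "real ^ 'n::finite \<Rightarrow> 'n \<Rightarrow> 'n set \<Rightarrow> real" where
  "Pm y i S = (\<Prod>j\<in>UNIV - {i}. fac y S j)"

lemma bern_split: "bern_prob y S = fac y S i * Pm y i S"
  unfolding bern_prob_def Pm_def fac_def
  by (subst prod.remove[of UNIV i]) auto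

lemma Pm_insert: "Pm y i (insert i S) = Pm y i S"
  unfolding Pm_def fac_def by (intro prod.cong) auto

lemma Pm_remove: "Pm y i (S - {i}) = Pm y i S"
  unfolding Pm_def fac_def by (intro prod.cong) auto

lemma pair_plus:
  fixes g :: "'n::finite set \<Rightarrow> real"
  shows "(\<Sum>S\<in>UNIV. g (insert i S) * bern_prob y S) = (\<Sum>S\<in>UNIV. if i \<in> S then g S * Pm y i S else 0)"
proof -
  have U: "(UNIV :: 'n set set) = {S. i \<in> S} \<union> {S. i \<notin> S}" by auto
  have "(\<Sum>S\<in>UNIV. g (insert i S) * bern_prob y S)
     = (\<Sum>S\<in>{S. i \<in> S}. g (insert i S) * bern_prob y S) + (\<Sum>S\<in>{S. i \<notin> S}. g (insert i S) * bern_prob y S)"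
    by (subst U, rule sum.union_disjoint) auto
  also have "(\<Sum>S\<in>{S. i \<notin> S}. g (insert i S) * bern_prob y S) = (\<Sum>S\<in>{S. i \<notin> S}. g (insert i S) * (1 - y $ i) * Pm y i (insert i S))"
    by (intro sum.cong) (auto simp: bern_split[of y _ i] fac_def Pm_insert)
  also have "\<dots> = (\<Sum>S\<in>{S. i \<in> S}. g S * (1 - y $ i) * Pm y i S)"
  proof (rule sum.reindex_bij_witness[where i="\<lambda>S. S - {i}" and j="insert i"])
  qed auto
  also have "(\<Sum>S\<in>{S. i \<in> S}. g (insert i S) * bern_prob y S) = (\<Sum>S\<in>{S. i \<in> S}. g S * y $ i * Pm y i S)"
    by (intro sum.cong) (auto simp: bern_split[of y _ i] fac_def insert_absorb)
  also have "(\<Sum>S\<in>{S. i \<in> S}. g S * y $ i * Pm y i S) + (\<Sum>S\<in>{S. i \<in> S}. g S * (1 - y $ i) * Pm y i S)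
     = (\<Sum>S\<in>{S. i \<in> S}. g S * Pm y i S)"
    by (simp add: sum.distrib[symmetric] algebra_simps)
  also have "\<dots> = (\<Sum>S\<in>UNIV. if i \<in> S then g S * Pm y i S else 0)"
    by (simp add: sum.If_cases)
  finally show ?thesis .
qed

lemma pair_minus:
  fixes g :: "'n::finite set \<Rightarrow> real"
  shows "(\<Sum>S\<in>UNIV. g (S - {i}) * bern_prob y S) = (\<Sum>S\<in>UNIV. if i \<notin> S then g S * Pm y i S else 0)"
proof -
  have U: "(UNIV :: 'n set set) = {S. i \<in> S} \<union> {S. i \<notin> S}" by auto
  have "(\<Sum>S\<in>UNIV. g (S - {i}) * bern_prob y S)
     = (\<Sum>S\<in>{S. i \<in> S}. g (S - {i}) * bern_prob y S) + (\<Sum>S\<in>{S. i \<notin> S}. g (S - {i}) * bern_prob y S)"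
    by (subst U, rule sum.union_disjoint) auto
  also have "(\<Sum>S\<in>{S. i \<in> S}. g (S - {i}) * bern_prob y S) = (\<Sum>S\<in>{S. i \<in> S}. g (S - {i}) * y $ i * Pm y i (S - {i}))"
    by (intro sum.cong) (auto simp: bern_split[of y _ i] fac_def Pm_remove)
  also have "\<dots> = (\<Sum>S\<in>{S. i \<notin> S}. g S * y $ i * Pm y i S)"
  proof (rule sum.reindex_bij_witness[where j="\<lambda>S. S - {i}" and i="insert i"])
  qed auto
  also have "(\<Sum>S\<in>{S. i \<notin> S}. g (S - {i}) * bern_prob y S) = (\<Sum>S\<in>{S. i \<notin> S}. g S * (1 - y $ i) * Pm y i S)"
    by (intro sum.cong) (auto simp: bern_split[of y _ i] fac_def)
  also have "(\<Sum>S\<in>{S. i \<notin> S}. g S * y $ i * Pm y i S) + (\<Sum>S\<in>{S. i \<notin> S}. g S * (1 - y $ i) * Pm y i S)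
     = (\<Sum>S\<in>{S. i \<notin> S}. g S * Pm y i S)"
    by (simp add: sum.distrib[symmetric] algebra_simps)
  also have "\<dots> = (\<Sum>S\<in>UNIV. if i \<notin> S then g S * Pm y i S else 0)"
    by (simp add: sum.If_cases)
  finally show ?thesis .
qed

lemma bern_sum: "(\<Sum>S\<in>UNIV. bern_prob y S) = 1"
proof -
  have "(1::real) = (\<Prod>j\<in>UNIV. y $ j + (1 - y $ j))" by simp
  also have "\<dots> = (\<Sum>X\<in>Pow UNIV. (\<Prod>x\<in>X. y $ x) * (\<Prod>x\<in>UNIV-X. 1 - y $ x))"
    by (rule prod_add) simp
  also have "\<dots> = (\<Sum>S\<in>UNIV. bern_prob y S)"
    unfolding bern_prob_def by (simp add: prod.If_cases Int_absorb2 Collect_mem_eq Diff_eq)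
  finally show ?thesis by simp
qed

lemma bern_nonneg: "(\<And>i. 0 \<le> y $ i \<and> y $ i \<le> 1) \<Longrightarrow> bern_prob y S \<ge> 0"
  unfolding bern_prob_def by (intro prod_nonneg) auto

lemma poly_in_box:
  fixes y :: "real ^ 'n::finite"
  assumes "y \<in> matroid_polytope M" shows "0 \<le> y $ i \<and> y $ i \<le> 1"
proof -
  have "convex {x :: real ^ 'n. \<forall>i. 0 \<le> x $ i \<and> x $ i \<le> 1}"
  proof (rule convexI)
    fix x z :: "real^'n" and u v :: real
    assume x: "x \<in> {x :: real ^ 'n. \<forall>i. 0 \<le> x $ i \<and> x $ i \<le> 1}"
      and z: "z \<in> {x :: real ^ 'n. \<forall>i. 0 \<le> x $ i \<and> x $ i \<le> 1}"
      and uv: "0 \<le> u" "0 \<le> v" "u + v = 1"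
    show "u *\<^sub>R x + v *\<^sub>R z \<in> {x :: real ^ 'n. \<forall>i. 0 \<le> x $ i \<and> x $ i \<le> 1}"
    proof (clarsimp)
      fix i
      have "u * x $ i \<le> u" "v * z $ i \<le> v" using x z uv by (auto intro: mult_left_le)
      then show "0 \<le> u * x $ i + v * z $ i \<and> u * x $ i + v * z $ i \<le> 1"
        using x z uv by auto
    qed
  qed
  moreover have "ind_vec ` M \<subseteq> {x :: real ^ 'n. \<forall>i. 0 \<le> x $ i \<and> x $ i \<le> 1}"
    by (auto simp: ind_vec_def)
  ultimately have "matroid_polytope M \<subseteq> {x :: real ^ 'n. \<forall>i. 0 \<le> x $ i \<and> x $ i \<le> 1}"
    unfolding matroid_polytope_def by (intro hull_minimal) auto
  with assms show ?thesis by auto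
qed


lemma G_deriv:
  fixes f :: "'n::finite set \<Rightarrow> real"
  shows "(multilinear_relax f has_derivative
     (\<lambda>h. \<Sum>S\<in>UNIV. f S * (\<Sum>j\<in>UNIV. (if j \<in> S then h $ j else - (h $ j)) * Pm y j S))) (at y)"
proof -
  have fd: "((\<lambda>y. fac y S j) has_derivative (\<lambda>h. if j \<in> S then h $ j else - (h $ j))) (at y)" for S j
    unfolding fac_def
    by (cases "j \<in> S") (auto intro!: derivative_eq_intros bounded_linear.has_derivative[OF bounded_linear_vec_nth])
  have "((\<lambda>y. \<Sum>S\<in>UNIV. f S * (\<Prod>j\<in>UNIV. fac y S j)) has_derivative
     (\<lambda>h. \<Sum>S\<in>UNIV. f S * (\<Sum>j\<in>UNIV. (if j \<in> S then h $ j else - (h $ j)) * (\<Prod>k\<in>UNIV - {j}. fac y S k)))) (at y)"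
    by (intro has_derivative_sum has_derivative_mult_right has_derivative_prod fd)
  moreover have "multilinear_relax f = (\<lambda>y. \<Sum>S\<in>UNIV. f S * (\<Prod>j\<in>UNIV. fac y S j))"
    by (rule ext) (simp add: multilinear_relax_def bern_prob_def fac_def)
  ultimately show ?thesis by (simp add: Pm_def)
qed

lemma G_gderiv:
  fixes f :: "'n::finite set \<Rightarrow> real" and y :: "real ^ 'n"
  defines "D \<equiv> (\<chi> j. \<Sum>S\<in>UNIV. f S * ((if j \<in> S then 1 else -1) * Pm y j S))"
  shows "GDERIV (multilinear_relax f) y :> D"
  unfolding gderiv_def
proof -
  have "(\<lambda>h. \<Sum>S\<in>UNIV. f S * (\<Sum>j\<in>UNIV. (if j \<in> S then h $ j else - (h $ j)) * Pm y j S)) = (\<lambda>h. inner h D)"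
  proof
    fix h :: "real ^ 'n"
    have "(\<Sum>S\<in>UNIV. f S * (\<Sum>j\<in>UNIV. (if j \<in> S then h $ j else - (h $ j)) * Pm y j S))
       = (\<Sum>S\<in>UNIV. \<Sum>j\<in>UNIV. h $ j * (f S * ((if j \<in> S then 1 else -1) * Pm y j S)))"
      unfolding sum_distrib_left by (intro sum.cong refl) auto
    also have "\<dots> = (\<Sum>j\<in>UNIV. \<Sum>S\<in>UNIV. h $ j * (f S * ((if j \<in> S then 1 else -1) * Pm y j S)))"
      by (rule sum.swap)
    also have "\<dots> = inner h D"
      by (simp add: D_def inner_vec_def sum_distrib_left)
    finally show "(\<Sum>S\<in>UNIV. f S * (\<Sum>j\<in>UNIV. (if j \<in> S then h $ j else - (h $ j)) * Pm y j S)) = inner h D" .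
  qed
  then show "(multilinear_relax f has_derivative (\<lambda>h. inner h D)) (at y)"
    using G_deriv[of f y] by simp
qed

lemma D_comp:
  fixes f :: "'n::finite set \<Rightarrow> real"
  shows "(\<Sum>S\<in>UNIV. f S * ((if j \<in> S then 1 else -1) * Pm y j S))
    = (\<Sum>S\<in>UNIV. f (insert j S) * bern_prob y S) - (\<Sum>S\<in>UNIV. f (S - {j}) * bern_prob y S)"
  unfolding pair_plus pair_minus sum_subtractf[symmetric]
  by (intro sum.cong) auto

lemma sum_bound:
  fixes g :: "'n::finite set \<Rightarrow> real"
  assumes "\<And>S. \<bar>g S\<bar> \<le> e" "\<And>i. 0 \<le> y $ i \<and> y $ i \<le> 1"
  shows "\<bar>\<Sum>S\<in>UNIV. g S * bern_prob y S\<bar> \<le> e"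
proof -
  have "\<bar>\<Sum>S\<in>UNIV. g S * bern_prob y S\<bar> \<le> (\<Sum>S\<in>UNIV. \<bar>g S * bern_prob y S\<bar>)"
    by (rule sum_abs)
  also have "\<dots> \<le> (\<Sum>S\<in>UNIV. e * bern_prob y S)"
    using assms bern_nonneg[of y] by (intro sum_mono) (simp add: abs_mult mult_right_mono)
  also have "\<dots> = e" using bern_sum[of y] by (simp add: sum_distrib_left[symmetric])
  finally show ?thesis .
qed

theorem lemma2:
  fixes f :: "'n::finite set \<Rightarrow> real"
    and fhat :: "nat \<Rightarrow> real ^ 'n \<Rightarrow> real"
    and eps :: "nat \<Rightarrow> real"
    and M :: "'n set set"
    and L :: nat
    and y :: "real ^ 'n"
  assumes f_nonneg: "\<And>S. f S \<ge> 0"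
    and fhat_poly: "\<And>L. L \<ge> 1 \<Longrightarrow> is_polynomial (fhat L)"
    and eps_nonneg: "\<And>L. L \<ge> 1 \<Longrightarrow> eps L \<ge> 0"
    and eps_lim: "eps \<longlonglongrightarrow> 0"
    and approx: "\<And>L S. L \<ge> 1 \<Longrightarrow> \<bar>f S - fhat L (ind_vec S)\<bar> \<le> eps L"
    and M: "matroid_indep M"
    and L: "L \<ge> 1"
    and y: "y \<in> matroid_polytope M"
  shows "\<exists>D. (GDERIV (multilinear_relax f) y :> D) \<and>
             norm (D - poly_estimator (fhat L) y) \<le> 2 * sqrt (real CARD('n)) * eps L"
proof -
  define D where "D = (\<chi> j. \<Sum>S\<in>UNIV. f S * ((if j \<in> S then 1 else -1) * Pm y j S))"
  have G: "GDERIV (multilinear_relax f) y :> D" unfolding D_def by (rule G_gderiv)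
  have box: "\<And>i. 0 \<le> y $ i \<and> y $ i \<le> 1" using poly_in_box[OF y] by blast
  define g where "g = (\<lambda>S. f S - fhat L (ind_vec S))"
  have gb: "\<bar>g S\<bar> \<le> eps L" for S unfolding g_def using approx[OF L] .
  have comp: "\<bar>(D - poly_estimator (fhat L) y) $ i\<bar> \<le> 2 * eps L" for i
  proof -
    have "(D - poly_estimator (fhat L) y) $ i
      = (\<Sum>S\<in>UNIV. g (insert i S) * bern_prob y S) - (\<Sum>S\<in>UNIV. g (S - {i}) * bern_prob y S)"
      unfolding D_def poly_estimator_def g_def
      by (simp add: D_comp left_diff_distrib sum_subtractf)
    also have "\<bar>\<dots>\<bar> \<le> \<bar>\<Sum>S\<in>UNIV. g (insert i S) * bern_prob y S\<bar> + \<bar>\<Sum>S\<in>UNIV. g (S - {i}) * bern_prob y S\<bar>"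
      by (rule abs_triangle_ineq4)
    also have "\<dots> \<le> eps L + eps L"
      by (intro add_mono sum_bound gb box)
    finally show ?thesis by simp
  qed
  have "norm (D - poly_estimator (fhat L) y) \<le> norm ((\<chi> i. 2 * eps L) :: real ^ 'n)"
    by (rule norm_le_componentwise_cart) (use comp eps_nonneg[OF L] in auto)
  also have "\<dots> = sqrt (real CARD('n) * (2 * eps L)^2)"
    by (simp add: norm_vec_def L2_set_def)
  also have "\<dots> = 2 * sqrt (real CARD('n)) * eps L"
    using eps_nonneg[OF L] by (simp add: real_sqrt_mult)
  finally show ?thesis using G by blast
qed

end
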